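(* Let $\lambda>0$, $\kappa>0$ and $\mu>0$ be fixed real numbers and let $m$ be a fixed positive integer. For $\alpha>0$ define $$I_{1}(m,\alpha)=\int_{0}^{\infty}x^{\mu-1}e^{-\lambda x}\left|\mathcal{L}_{m}^{(\alpha)}(x)\right|^{\kappa}\,dx .$$ Then there are coefficients $D_0,D_1,D_2,\ldots$, not depending on $\alpha$, such that $$I_{1}(m,\alpha)\sim \frac{\alpha^{\kappa m}\,\Gamma(\mu)}{\lambda^{\mu}\,(m!)^{\kappa}}\sum_{k=0}^{\infty}\frac{D_k}{\alpha^{k}},\qquad \alpha\to\infty .$$ The first three coefficients are $$D_0=1,\qquad D_1=\frac{\kappa m\,(-2\mu+m\lambda+\lambda)}{2\lambda},$$ $$D_2=\frac{\kappa m}{24\lambda^{2}}\Bigl(-12\mu\lambda\kappa m^{2}+24\mu\lambda-12\mu\lambda\kappa m-4m^{2}\lambda^{2}-6m\lambda^{2}+3m^{3}\lambda^{2}\kappa-12\mu^{2}+12\mu^{2}\kappa m-12\mu+12\mu\kappa m+6\lambda^{2}\kappa m^{2}-2\lambda^{2}+3\lambda^{2}\kappa m\Bigr).$$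
   Context: $\mathcal{L}_{m}^{(\alpha)}(x)$ denotes the standard (generalized) Laguerre polynomial of degree $m$ and parameter $\alpha$, $\mathcal{L}_{m}^{(\alpha)}(x)=\sum_{k=0}^{m}\binom{m+\alpha}{m-k}\frac{(-x)^k}{k!}$. The symbol $\sim$ denotes a Poincaré-type asymptotic expansion: for every integer $N\ge 0$, $I_1(m,\alpha)=\frac{\alpha^{\kappa m}\Gamma(\mu)}{\lambda^{\mu}(m!)^{\kappa}}\left(\sum_{k=0}^{N-1}D_k\alpha^{-k}+O(\alpha^{-N})\right)$ as $\alpha\to\infty$, with all other parameters fixed. *)

theory Defs
  imports "HOL-Analysis.Analysis" "HOL-Library.Landau_Symbols"
begin

definition laguerre :: "nat \<Rightarrow> real \<Rightarrow> real \<Rightarrow> real" where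
  "laguerre m a x = (\<Sum>k\<le>m. ((real m + a) gchoose (m - k)) * (- x) ^ k / fact k)"

definition I1 :: "real \<Rightarrow> real \<Rightarrow> real \<Rightarrow> nat \<Rightarrow> real \<Rightarrow> real" where
  "I1 lam kap mu m a =
     (LINT x:{0<..}|lborel. x powr (mu - 1) * exp (- lam * x) * \<bar>laguerre m a x\<bar> powr kap)"

end

theory Submission
  imports Defs "HOL-Computational_Algebra.Polynomial"
begin
lemma gamma_bochner:
  assumes "s > (0::real)"
  shows "has_bochner_integral lborel (\<lambda>t. indicator {0..} t * t powr (s - 1) / exp t) (Gamma s)"
proof (rule has_bochner_integral_nn_integral)
  show "(\<lambda>t. indicator {0..} t * t powr (s - 1) / exp t) \<in> borel_measurable lborel" by measurable
  show "AE x in lborel. 0 \<le> indicator {0..} x * x powr (s - 1) / exp x" by (auto simp: indicator_def)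
  show "0 \<le> Gamma s" using assms by (simp add: less_imp_le)
  show "(\<integral>\<^sup>+ x. ennreal (indicator {0..} x * x powr (s - 1) / exp x) \<partial>lborel) = ennreal (Gamma s)"
    using Gamma_conv_nn_integral_real[OF assms] by simp
qed

lemma gamma_int:
  assumes lam: "lam > 0" and s: "s > (0::real)"
  shows "set_integrable lborel {0<..} (\<lambda>x. x powr (s-1) * exp (-lam*x))"
    and "(LINT x:{0<..}|lborel. x powr (s-1) * exp (-lam*x)) = Gamma s / lam powr s"
proof -
  let ?g = "\<lambda>t. indicator {0..} t * t powr (s - 1) / exp t"
  have g: "integrable lborel ?g" "integral\<^sup>L lborel ?g = Gamma s"
    using gamma_bochner[OF s] by (auto simp: has_bochner_integral_iff)
  have gl: "integrable lborel (\<lambda>x. ?g (0 + lam * x))"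
    using lborel_integrable_real_affine[OF g(1), of lam 0] lam by simp
  have gv: "integral\<^sup>L lborel ?g = lam * (\<integral>x. ?g (0 + lam * x) \<partial>lborel)"
    using lborel_integral_real_affine[of lam ?g 0] lam by simp
  have eq: "indicator {0<..} x *\<^sub>R (x powr (s-1) * exp (-lam*x)) = lam powr (1 - s) * ?g (0 + lam * x)" for x
  proof (cases "x > 0")
    case True
    have "(lam * x) powr (s - 1) = lam powr (s-1) * x powr (s-1)"
      using True lam by (simp add: powr_mult)
    moreover have "lam powr (1 - s) * lam powr (s-1) = 1"
      using lam by (simp add: powr_add[symmetric])
    ultimately show ?thesis using True lam
      by (simp add: indicator_def exp_minus field_simps)
  next
    case False
    then show ?thesis using lam by (auto simp: indicator_def zero_le_mult_iff)
  qed
  show "set_integrable lborel {0<..} (\<lambda>x. x powr (s-1) * exp (-lam*x))"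
    unfolding set_integrable_def eq by (rule integrable_mult_right[OF gl])
  have "(LINT x:{0<..}|lborel. x powr (s-1) * exp (-lam*x)) = lam powr (1 - s) * (\<integral>x. ?g (0 + lam * x) \<partial>lborel)"
    unfolding set_lebesgue_integral_def eq by (rule integral_mult_right_zero)
  also have "\<dots> = lam powr (1 - s) * (Gamma s / lam)" using gv g(2) lam by simp
  also have "\<dots> = Gamma s / lam powr s" using lam by (simp add: powr_diff field_simps)
  finally show "(LINT x:{0<..}|lborel. x powr (s-1) * exp (-lam*x)) = Gamma s / lam powr s" .
qed

definition wt :: "real \<Rightarrow> real \<Rightarrow> real \<Rightarrow> real" where
  "wt lam mu x = x powr (mu - 1) * exp (- lam * x)"
definition Mom :: "real \<Rightarrow> real \<Rightarrow> nat \<Rightarrow> real" where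
  "Mom lam mu i = Gamma (mu + real i) / lam powr (mu + real i)"
definition Lam :: "real \<Rightarrow> real \<Rightarrow> real poly \<Rightarrow> real" where
  "Lam lam mu q = (\<Sum>i\<le>degree q. coeff q i * Mom lam mu i)"

lemma set_int_sum:
  fixes f :: "'i \<Rightarrow> 'a \<Rightarrow> real"
  assumes "\<And>i. i \<in> I \<Longrightarrow> set_integrable M A (f i)"
  shows "set_integrable M A (\<lambda>x. \<Sum>i\<in>I. f i x)"
    "(LINT x:A|M. (\<Sum>i\<in>I. f i x)) = (\<Sum>i\<in>I. LINT x:A|M. f i x)"
proof -
  have eq: "(\<lambda>x. indicator A x *\<^sub>R (\<Sum>i\<in>I. f i x)) = (\<lambda>x. \<Sum>i\<in>I. indicator A x *\<^sub>R f i x)"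
    by (simp add: sum_distrib_left)
  show "set_integrable M A (\<lambda>x. \<Sum>i\<in>I. f i x)"
    unfolding set_integrable_def eq using assms unfolding set_integrable_def by (auto intro!: integrable_sum)
  show "(LINT x:A|M. (\<Sum>i\<in>I. f i x)) = (\<Sum>i\<in>I. LINT x:A|M. f i x)"
    unfolding set_lebesgue_integral_def eq using assms unfolding set_integrable_def
    by (rule Bochner_Integration.integral_sum) auto
qed

lemma mono_int:
  assumes lam: "lam > 0" and mu: "mu > 0"
  shows "set_integrable lborel {0<..} (\<lambda>x. wt lam mu x * x ^ i)"
    "(LINT x:{0<..}|lborel. wt lam mu x * x ^ i) = Mom lam mu i"
proof -
  have s: "mu + real i > 0" using mu by simp
  have eq: "wt lam mu x * x ^ i = x powr (mu + real i - 1) * exp (- lam * x)" if "x \<in> {0<..}" for x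
    using that by (simp add: wt_def powr_realpow[symmetric] powr_add[symmetric] algebra_simps)
  show "set_integrable lborel {0<..} (\<lambda>x. wt lam mu x * x ^ i)"
  proof -
    have "set_integrable lborel {0<..} (\<lambda>x. wt lam mu x * x ^ i) = set_integrable lborel {0<..} (\<lambda>x. x powr (mu + real i - 1) * exp (- lam * x))"
      by (rule set_integrable_cong) (use eq in auto)
    then show ?thesis using gamma_int(1)[OF lam s] by simp
  qed
  have "(LINT x:{0<..}|lborel. wt lam mu x * x ^ i) = (LINT x:{0<..}|lborel. x powr (mu + real i - 1) * exp (- lam * x))"
    by (rule set_lebesgue_integral_cong) (use eq in auto)
  also have "\<dots> = Mom lam mu i" using gamma_int(2)[OF lam s] by (simp add: Mom_def)
  finally show "(LINT x:{0<..}|lborel. wt lam mu x * x ^ i) = Mom lam mu i" .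
qed

lemma poly_int:
  assumes lam: "lam > 0" and mu: "mu > 0"
  shows "set_integrable lborel {0<..} (\<lambda>x. wt lam mu x * poly q x)"
    "(LINT x:{0<..}|lborel. wt lam mu x * poly q x) = Lam lam mu q"
proof -
  have eq: "wt lam mu x * poly q x = (\<Sum>i\<le>degree q. coeff q i * (wt lam mu x * x ^ i))" for x
    by (simp add: poly_altdef sum_distrib_left mult_ac)
  have ii: "set_integrable lborel {0<..} (\<lambda>x. coeff q i * (wt lam mu x * x ^ i))" for i
    using mono_int(1)[OF lam mu, of i] by simp
  show "set_integrable lborel {0<..} (\<lambda>x. wt lam mu x * poly q x)"
    unfolding eq by (rule set_int_sum(1)[OF ii])
  show "(LINT x:{0<..}|lborel. wt lam mu x * poly q x) = Lam lam mu q"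
    unfolding eq set_int_sum(2)[OF ii] Lam_def using mono_int(2)[OF lam mu] by simp
qed

lemma Lam_add: "lam > 0 \<Longrightarrow> mu > 0 \<Longrightarrow> Lam lam mu (p + q) = Lam lam mu p + Lam lam mu q"
  using poly_int[of lam mu p] poly_int[of lam mu q] poly_int[of lam mu "p+q"]
  by (simp add: distrib_left set_integral_add(2)[symmetric])

lemma Lam_smult: "lam > 0 \<Longrightarrow> mu > 0 \<Longrightarrow> Lam lam mu (smult c p) = c * Lam lam mu p"
  using poly_int[of lam mu p] poly_int[of lam mu "smult c p"]
  by (simp add: mult.left_commute[of _ c])

lemma Lam_monom: "Lam lam mu (monom c i) = c * Mom lam mu i"
proof (cases "c = 0")
  case True then show ?thesis by (simp add: Lam_def)
next
  case False
  have "Lam lam mu (monom c i) = (\<Sum>ia\<le>i. coeff (monom c i) ia * Mom lam mu ia)"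
    using False by (simp add: Lam_def degree_monom_eq)
  also have "\<dots> = (\<Sum>ia\<le>i. if ia = i then c * Mom lam mu ia else 0)"
    by (intro sum.cong) (auto simp: coeff_monom)
  finally show ?thesis by simp
qed

lemma pp_eval: "poly (poly (p :: real poly poly) [:t:]) x = (\<Sum>n\<le>degree p. poly (coeff p n) x * t ^ n)"
proof -
  have "poly p [:t:] = (\<Sum>n\<le>degree p. coeff p n * [:t:] ^ n)" by (simp add: poly_altdef)
  then show ?thesis by (simp add: poly_sum poly_power)
qed

lemma pp_int:
  assumes lam: "lam > 0" and mu: "mu > 0"
  shows "set_integrable lborel {0<..} (\<lambda>x. wt lam mu x * poly (poly p [:t:]) x)"
    "(LINT x:{0<..}|lborel. wt lam mu x * poly (poly p [:t:]) x) = (\<Sum>n\<le>degree p. Lam lam mu (coeff p n) * t ^ n)"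
proof -
  have eq: "wt lam mu x * poly (poly p [:t:]) x = (\<Sum>n\<le>degree p. t ^ n * (wt lam mu x * poly (coeff p n) x))" for x
    by (simp add: pp_eval sum_distrib_left mult_ac)
  have ii: "set_integrable lborel {0<..} (\<lambda>x. t ^ n * (wt lam mu x * poly (coeff p n) x))" for n
    using poly_int(1)[OF lam mu, of "coeff p n"] by simp
  show "set_integrable lborel {0<..} (\<lambda>x. wt lam mu x * poly (poly p [:t:]) x)"
    unfolding eq by (rule set_int_sum(1)[OF ii])
  show "(LINT x:{0<..}|lborel. wt lam mu x * poly (poly p [:t:]) x) = (\<Sum>n\<le>degree p. Lam lam mu (coeff p n) * t ^ n)"
    unfolding eq set_int_sum(2)[OF ii] by (intro sum.cong refl) (simp add: poly_int(2)[OF lam mu] mult_ac)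
qed

lemma pow_le_onepx:
  assumes "x \<ge> (0::real)" "i \<le> d"
  shows "x ^ i \<le> (1 + x) ^ d"
proof -
  have "x ^ i \<le> (1 + x) ^ i" using assms by (intro power_mono) auto
  also have "\<dots> \<le> (1 + x) ^ d" using assms by (intro power_increasing) auto
  finally show ?thesis .
qed

lemma poly_bound:
  assumes "x \<ge> (0::real)"
  shows "\<bar>poly q x\<bar> \<le> (\<Sum>i\<le>degree q. \<bar>coeff q i\<bar>) * (1 + x) ^ degree q"
proof -
  have "\<bar>poly q x\<bar> \<le> (\<Sum>i\<le>degree q. \<bar>coeff q i * x ^ i\<bar>)"
    unfolding poly_altdef by (rule sum_abs)
  also have "\<dots> \<le> (\<Sum>i\<le>degree q. \<bar>coeff q i\<bar> * (1 + x) ^ degree q)"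
  proof (rule sum_mono)
    fix i assume "i \<in> {..degree q}"
    then have "x ^ i \<le> (1 + x) ^ degree q"
      using assms by (intro pow_le_onepx) auto
    then show "\<bar>coeff q i * x ^ i\<bar> \<le> \<bar>coeff q i\<bar> * (1 + x) ^ degree q"
      using assms by (simp add: abs_mult mult_left_mono)
  qed
  finally show ?thesis by (simp add: sum_distrib_right)
qed

lemma pp_bound:
  fixes p :: "real poly poly"
  shows "\<exists>C M. \<forall>x t. x \<ge> 0 \<longrightarrow> t \<ge> 0 \<longrightarrow> t \<le> 1 \<longrightarrow> \<bar>poly (poly p [:t:]) x\<bar> \<le> C * (1 + x) ^ M"
proof -
  define M where "M = (\<Sum>n\<le>degree p. degree (coeff p n))"
  define C where "C = (\<Sum>n\<le>degree p. \<Sum>i\<le>degree (coeff p n). \<bar>coeff (coeff p n) i\<bar>)"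
  have "\<bar>poly (poly p [:t:]) x\<bar> \<le> C * (1 + x) ^ M" if x: "x \<ge> 0" and t: "t \<ge> 0" "t \<le> 1" for x t
  proof -
    have "\<bar>poly (poly p [:t:]) x\<bar> \<le> (\<Sum>n\<le>degree p. \<bar>poly (coeff p n) x * t ^ n\<bar>)"
      unfolding pp_eval by (rule sum_abs)
    also have "\<dots> \<le> (\<Sum>n\<le>degree p. (\<Sum>i\<le>degree (coeff p n). \<bar>coeff (coeff p n) i\<bar>) * (1 + x) ^ M)"
    proof (rule sum_mono)
      fix n assume n: "n \<in> {..degree p}"
      define S where "S = (\<Sum>i\<le>degree (coeff p n). \<bar>coeff (coeff p n) i\<bar>)"
      have tn: "\<bar>t ^ n\<bar> \<le> 1" using t by (simp add: power_le_one)
      have dm: "degree (coeff p n) \<le> M" unfolding M_def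
        by (rule member_le_sum) (use n in auto)
      have S0: "0 \<le> S" unfolding S_def by (simp add: sum_nonneg)
      have "(1 + x) ^ degree (coeff p n) \<le> (1 + x) ^ M" using x dm by (intro power_increasing) auto
      then have "S * (1 + x) ^ degree (coeff p n) \<le> S * (1 + x) ^ M" using S0 by (rule mult_left_mono)
      then have A: "\<bar>poly (coeff p n) x\<bar> \<le> S * (1 + x) ^ M"
        using poly_bound[OF x, of "coeff p n"] unfolding S_def by linarith
      have "\<bar>poly (coeff p n) x * t ^ n\<bar> = \<bar>poly (coeff p n) x\<bar> * \<bar>t ^ n\<bar>" by (rule abs_mult)
      also have "\<dots> \<le> \<bar>poly (coeff p n) x\<bar> * 1" using tn by (intro mult_left_mono) auto
      also have "\<dots> \<le> S * (1 + x) ^ M" using A by simp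
      finally show "\<bar>poly (coeff p n) x * t ^ n\<bar> \<le> (\<Sum>i\<le>degree (coeff p n). \<bar>coeff (coeff p n) i\<bar>) * (1 + x) ^ M"
        unfolding S_def .
    qed
    also have "\<dots> = C * (1 + x) ^ M" by (simp add: C_def sum_distrib_right)
    finally show ?thesis .
  qed
  then show ?thesis by blast
qed

lemma gbin_bound:
  assumes "a \<ge> (0::real)"
  shows "\<bar>a gchoose j\<bar> \<le> (a + 1) ^ j"
proof -
  have "\<bar>\<Prod>i=0..<j. a - of_nat i\<bar> = (\<Prod>i=0..<j. \<bar>a - of_nat i\<bar>)"
    using prod_norm[of "\<lambda>i. a - of_nat i" "{0..<j}"] by simp
  also have "\<dots> \<le> (\<Prod>i=0..<j. (a + 1) * of_nat (Suc i))"
  proof (rule prod_mono)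
    fix i assume "i \<in> {0..<j}"
    have "\<bar>a - of_nat i\<bar> \<le> a + of_nat i" using assms by simp
    also have "\<dots> \<le> (a + 1) * of_nat (Suc i)" using assms by (simp add: algebra_simps)
    finally show "0 \<le> \<bar>a - of_nat i\<bar> \<and> \<bar>a - of_nat i\<bar> \<le> (a + 1) * of_nat (Suc i)" by simp
  qed
  also have "\<dots> = (a + 1) ^ j * fact j"
    by (simp add: prod.distrib fact_prod_Suc)
  finally have "\<bar>\<Prod>i=0..<j. a - of_nat i\<bar> \<le> (a + 1) ^ j * fact j" .
  then show ?thesis
    by (simp add: gbinomial_prod_rev abs_divide divide_le_eq)
qed

lemma binom_tail:
  fixes kap z :: real
  assumes k: "kap \<ge> 0" and z: "(kap + 1) * \<bar>z\<bar> \<le> 1/2"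
  shows "\<bar>(1 + z) powr kap - (\<Sum>j<N. (kap gchoose j) * z ^ j)\<bar> \<le> 2 * ((kap + 1) * \<bar>z\<bar>) ^ N"
proof -
  define q where "q = (kap + 1) * \<bar>z\<bar>"
  have q0: "0 \<le> q" and q1: "q \<le> 1/2" using k z by (auto simp: q_def)
  have zl: "\<bar>z\<bar> < 1"
  proof -
    have "\<bar>z\<bar> \<le> (kap + 1) * \<bar>z\<bar>" using k by (simp add: mult_le_cancel_right1)
    then show ?thesis using z by linarith
  qed
  define g where "g n = (kap gchoose n) * z ^ n" for n
  have s: "g sums (1 + z) powr kap" unfolding g_def by (rule gen_binomial_real[OF zl])
  have s2: "(\<lambda>i. g (i + N)) sums ((1 + z) powr kap - (\<Sum>j<N. g j))"
    by (rule sums_split_initial_segment[OF s])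
  have gb: "\<bar>g (i + N)\<bar> \<le> q ^ N * q ^ i" for i
  proof -
    have "\<bar>g (i + N)\<bar> = \<bar>kap gchoose (i + N)\<bar> * \<bar>z\<bar> ^ (i + N)" by (simp add: g_def abs_mult power_abs)
    also have "\<dots> \<le> (kap + 1) ^ (i + N) * \<bar>z\<bar> ^ (i + N)"
      by (intro mult_right_mono gbin_bound k) auto
    also have "\<dots> = q ^ N * q ^ i" by (simp add: q_def power_mult_distrib power_add)
    finally show ?thesis .
  qed
  have sg: "summable (\<lambda>i. q ^ N * q ^ i)" using q0 q1 by (intro summable_mult summable_geometric) auto
  have sa: "summable (\<lambda>i. \<bar>g (i + N)\<bar>)"
    by (rule summable_comparison_test'[OF sg]) (use gb in auto)
  have "\<bar>(1 + z) powr kap - (\<Sum>j<N. g j)\<bar> = \<bar>\<Sum>i. g (i + N)\<bar>" using s2 by (simp add: sums_iff)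
  also have "\<dots> \<le> (\<Sum>i. \<bar>g (i + N)\<bar>)" by (rule summable_rabs[OF sa])
  also have "\<dots> \<le> (\<Sum>i. q ^ N * q ^ i)" by (rule suminf_le[OF gb sa sg])
  also have "\<dots> = q ^ N * (1 / (1 - q))" using q0 q1 by (simp add: suminf_mult summable_geometric suminf_geometric)
  also have "\<dots> \<le> q ^ N * 2" using q0 q1 by (intro mult_left_mono) (auto simp: field_simps)
  finally show ?thesis unfolding g_def q_def by simp
qed

lemma binom_rem:
  fixes kap :: real
  assumes k: "kap > 0"
  shows "\<exists>K. \<forall>e::real. \<bar>\<bar>1 + e\<bar> powr kap - (\<Sum>j<N. (kap gchoose j) * e ^ j)\<bar> \<le> K * \<bar>e\<bar> ^ N * (1 + \<bar>e\<bar>) ^ nat \<lceil>kap\<rceil>"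
proof -
  define d where "d = 1 / (2 * (kap + 1))"
  have d0: "d > 0" using k by (simp add: d_def)
  define K where "K = 2 * (kap + 1) ^ N + (1 / d) ^ N + real N * (kap + 1) ^ N * ((1 + d) / d) ^ N"
  have "\<bar>\<bar>1 + e\<bar> powr kap - (\<Sum>j<N. (kap gchoose j) * e ^ j)\<bar> \<le> K * \<bar>e\<bar> ^ N * (1 + \<bar>e\<bar>) ^ nat \<lceil>kap\<rceil>" for e :: real
  proof -
    have P1: "1 \<le> (1 + \<bar>e\<bar>) ^ nat \<lceil>kap\<rceil>" by simp
    have KK: "0 \<le> (1 / d) ^ N" "0 \<le> real N * (kap + 1) ^ N * ((1 + d) / d) ^ N" "0 \<le> 2 * (kap + 1) ^ N"
      using d0 k by auto
    have eN: "0 \<le> \<bar>e\<bar> ^ N" by simp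
    show ?thesis
    proof (cases "\<bar>e\<bar> \<le> d")
      case True
      have z: "(kap + 1) * \<bar>e\<bar> \<le> 1/2"
        using True k by (simp add: d_def field_simps)
      have pe: "\<bar>1 + e\<bar> = 1 + e" using z k True d0
        by (smt (verit, ccfv_SIG) d_def divide_le_eq_1_pos mult_le_cancel_right1)
      have "\<bar>\<bar>1 + e\<bar> powr kap - (\<Sum>j<N. (kap gchoose j) * e ^ j)\<bar> \<le> 2 * ((kap + 1) * \<bar>e\<bar>) ^ N"
        unfolding pe by (rule binom_tail[OF _ z]) (use k in auto)
      also have "\<dots> = (2 * (kap + 1) ^ N) * \<bar>e\<bar> ^ N" by (simp add: power_mult_distrib)
      also have "\<dots> \<le> K * \<bar>e\<bar> ^ N" unfolding K_def using KK eN by (intro mult_right_mono) auto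
      also have "\<dots> \<le> K * \<bar>e\<bar> ^ N * (1 + \<bar>e\<bar>) ^ nat \<lceil>kap\<rceil>"
      proof -
        have nn: "0 \<le> K * \<bar>e\<bar> ^ N" unfolding K_def using KK eN by simp
        show ?thesis using mult_left_mono[OF P1 nn] by simp
      qed
      finally show ?thesis .
    next
      case False
      then have ed: "d < \<bar>e\<bar>" by simp
      have r1: "1 \<le> (1 / d) ^ N * \<bar>e\<bar> ^ N"
      proof -
        have "1 \<le> \<bar>e\<bar> / d" using ed d0 by simp
        then have "1 \<le> (\<bar>e\<bar> / d) ^ N" by simp
        then show ?thesis by (simp add: power_divide)
      qed
      have powle: "\<bar>1 + e\<bar> powr kap \<le> (1 + \<bar>e\<bar>) ^ nat \<lceil>kap\<rceil>"
      proof (cases "1 + e = 0")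
        case True then show ?thesis by simp
      next
        case False
        have "\<bar>1 + e\<bar> powr kap \<le> (1 + \<bar>e\<bar>) powr kap"
          using False k by (intro powr_mono2) auto
        also have "\<dots> \<le> (1 + \<bar>e\<bar>) powr real (nat \<lceil>kap\<rceil>)"
          by (intro powr_mono) (use k in auto)
        also have "\<dots> = (1 + \<bar>e\<bar>) ^ nat \<lceil>kap\<rceil>"
          by (subst powr_realpow) auto
        finally show ?thesis .
      qed
      have sumle: "\<bar>\<Sum>j<N. (kap gchoose j) * e ^ j\<bar> \<le> real N * (kap + 1) ^ N * ((1 + d) / d) ^ N * \<bar>e\<bar> ^ N"
      proof -
        have "\<bar>\<Sum>j<N. (kap gchoose j) * e ^ j\<bar> \<le> (\<Sum>j<N. \<bar>(kap gchoose j) * e ^ j\<bar>)" by (rule sum_abs)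
        also have "\<dots> \<le> (\<Sum>j<N. (kap + 1) ^ N * ((1 + d) / d) ^ N * \<bar>e\<bar> ^ N)"
        proof (rule sum_mono)
          fix j assume "j \<in> {..<N}"
          then have jN: "j \<le> N" by simp
          have a1: "\<bar>kap gchoose j\<bar> \<le> (kap + 1) ^ N"
            using gbin_bound[of kap j] k jN
            by (meson less_imp_le order.trans le_add_same_cancel2 power_increasing zero_le_one)
          have a2: "\<bar>e\<bar> ^ j \<le> (1 + \<bar>e\<bar>) ^ N" by (intro pow_le_onepx jN) simp
          have a3: "1 + \<bar>e\<bar> \<le> ((1 + d) / d) * \<bar>e\<bar>" using ed d0 by (simp add: field_simps)
          have a4: "(1 + \<bar>e\<bar>) ^ N \<le> ((1 + d) / d) ^ N * \<bar>e\<bar> ^ N"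
            using power_mono[OF a3, of N] by (simp only: power_mult_distrib)
          have "\<bar>(kap gchoose j) * e ^ j\<bar> = \<bar>kap gchoose j\<bar> * \<bar>e\<bar> ^ j" by (simp add: abs_mult power_abs)
          also have "\<dots> \<le> (kap + 1) ^ N * (((1 + d) / d) ^ N * \<bar>e\<bar> ^ N)"
            using a1 a2 a4 k by (intro mult_mono) auto
          finally show "\<bar>(kap gchoose j) * e ^ j\<bar> \<le> (kap + 1) ^ N * ((1 + d) / d) ^ N * \<bar>e\<bar> ^ N"
            by (simp add: mult_ac)
        qed
        also have "\<dots> = real N * (kap + 1) ^ N * ((1 + d) / d) ^ N * \<bar>e\<bar> ^ N" by simp
        finally show ?thesis .
      qed
      have "\<bar>\<bar>1 + e\<bar> powr kap - (\<Sum>j<N. (kap gchoose j) * e ^ j)\<bar>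
          \<le> \<bar>1 + e\<bar> powr kap + \<bar>\<Sum>j<N. (kap gchoose j) * e ^ j\<bar>"
        using abs_triangle_ineq4[of "\<bar>1 + e\<bar> powr kap" "\<Sum>j<N. (kap gchoose j) * e ^ j"] by simp
      also have "\<dots> \<le> (1 / d) ^ N * \<bar>e\<bar> ^ N * (1 + \<bar>e\<bar>) ^ nat \<lceil>kap\<rceil>
          + real N * (kap + 1) ^ N * ((1 + d) / d) ^ N * \<bar>e\<bar> ^ N * (1 + \<bar>e\<bar>) ^ nat \<lceil>kap\<rceil>"
      proof (rule add_mono)
        show "\<bar>1 + e\<bar> powr kap \<le> (1 / d) ^ N * \<bar>e\<bar> ^ N * (1 + \<bar>e\<bar>) ^ nat \<lceil>kap\<rceil>"
          using powle r1 by (metis dual_order.trans mult_le_cancel_right1 zero_le_power abs_ge_zero add_nonneg_nonneg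
              zero_le_one order_less_le_trans not_le)
        show "\<bar>\<Sum>j<N. (kap gchoose j) * e ^ j\<bar> \<le> real N * (kap + 1) ^ N * ((1 + d) / d) ^ N * \<bar>e\<bar> ^ N * (1 + \<bar>e\<bar>) ^ nat \<lceil>kap\<rceil>"
          using sumle P1 KK eN by (smt (verit) mult_le_cancel_left1 zero_le_mult_iff)
      qed
      also have "\<dots> \<le> K * \<bar>e\<bar> ^ N * (1 + \<bar>e\<bar>) ^ nat \<lceil>kap\<rceil>"
        unfolding K_def using KK eN P1 by (simp add: algebra_simps)
      finally show ?thesis .
    qed
  qed
  then show ?thesis by blast
qed

definition Bp :: "nat \<Rightarrow> nat \<Rightarrow> real poly poly" where
  "Bp m k = (\<Prod>i<m-k. [:1, of_nat (m - i):])"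

definition Rpp :: "nat \<Rightarrow> real poly poly" where
  "Rpp m = (\<Sum>k\<le>m. monom (of_nat (m choose k) * (-1) ^ k * monom 1 k) k * Bp m k)"

lemma Bp_eval: "poly (poly (Bp m k) [:t:]) x = (\<Prod>i<m-k. 1 + real (m - i) * t)"
  by (simp add: Bp_def poly_prod algebra_simps)

lemma Rpp_eval: "poly (poly (Rpp m) [:t:]) x =
   (\<Sum>k\<le>m. real (m choose k) * (- x) ^ k * t ^ k * (\<Prod>i<m-k. 1 + real (m - i) * t))"
proof -
  have "poly (poly (Rpp m) [:t:]) x = (\<Sum>k\<le>m. poly (poly (monom (of_nat (m choose k) * (-1) ^ k * monom 1 k) k) [:t:]) x * poly (poly (Bp m k) [:t:]) x)"
    by (simp add: Rpp_def poly_sum)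
  also have "\<dots> = (\<Sum>k\<le>m. real (m choose k) * (- x) ^ k * t ^ k * (\<Prod>i<m-k. 1 + real (m - i) * t))"
  proof (intro sum.cong refl)
    fix k
    have "poly (poly (monom (of_nat (m choose k) * (-1) ^ k * monom 1 k) k) [:t:]) x = real (m choose k) * (- x) ^ k * t ^ k"
      by (simp add: poly_monom poly_power power_minus' mult_ac)
    then show "poly (poly (monom (of_nat (m choose k) * (-1) ^ k * monom 1 k) k) [:t:]) x * poly (poly (Bp m k) [:t:]) x =
       real (m choose k) * (- x) ^ k * t ^ k * (\<Prod>i<m-k. 1 + real (m - i) * t)"
      by (simp add: Bp_eval)
  qed
  finally show ?thesis .
qed

lemma laguerre_R:
  assumes a: "a > 0"
  shows "laguerre m a x = a ^ m / fact m * poly (poly (Rpp m) [:1/a:]) x"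
proof -
  have "laguerre m a x = (\<Sum>k\<le>m. a ^ m / fact m * (real (m choose k) * (- x) ^ k * (1/a) ^ k * (\<Prod>i<m-k. 1 + real (m - i) * (1/a))))"
    unfolding laguerre_def
  proof (intro sum.cong refl)
    fix k assume "k \<in> {..m}"
    then have km: "k \<le> m" by simp
    define P where "P = (\<Prod>i<m-k. a + real (m - i))"
    have g: "(real m + a) gchoose (m - k) = P / fact (m - k)"
    proof -
      have "(\<Prod>i=0..<m-k. real m + a - of_nat i) = P"
        unfolding P_def atLeast0LessThan by (intro prod.cong refl) (auto simp: of_nat_diff)
      then show ?thesis by (simp add: gbinomial_prod_rev)
    qed
    have p: "a ^ m * (1/a) ^ k * (\<Prod>i<m-k. 1 + real (m - i) * (1/a)) = P"
    proof -
      have "a ^ m * (1/a) ^ k = a ^ (m - k)" using a km by (simp add: power_diff power_one_over field_simps)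
      also have "\<dots> = (\<Prod>i<m-k. a)" by simp
      finally have "a ^ m * (1/a) ^ k * (\<Prod>i<m-k. 1 + real (m - i) * (1/a)) = (\<Prod>i<m-k. a * (1 + real (m - i) * (1/a)))"
        by (simp add: prod.distrib)
      also have "\<dots> = P" unfolding P_def using a by (intro prod.cong refl) (simp add: field_simps)
      finally show ?thesis .
    qed
    have b: "real (m choose k) = fact m / (fact k * fact (m - k))" by (rule binomial_fact[OF km])
    show "(real m + a gchoose (m - k)) * (- x) ^ k / fact k =
        a ^ m / fact m * (real (m choose k) * (- x) ^ k * (1 / a) ^ k * (\<Prod>i<m - k. 1 + real (m - i) * (1 / a)))"
    proof -
      have "a ^ m / fact m * (real (m choose k) * (- x) ^ k * (1 / a) ^ k * (\<Prod>i<m - k. 1 + real (m - i) * (1 / a)))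
          = real (m choose k) / fact m * (- x) ^ k * (a ^ m * (1/a) ^ k * (\<Prod>i<m-k. 1 + real (m - i) * (1/a)))"
        by (simp add: field_simps)
      also have "\<dots> = P * (- x) ^ k / (fact k * fact (m - k))" unfolding p b by (simp add: field_simps)
      finally show ?thesis unfolding g by (simp add: field_simps)
    qed
  qed
  also have "\<dots> = a ^ m / fact m * poly (poly (Rpp m) [:1/a:]) x"
    unfolding Rpp_eval sum_distrib_left ..
  finally show ?thesis .
qed

lemma coeff_mult_lin: fixes p :: "'a::comm_ring_1 poly" shows "coeff (p * [:1, c:]) n = coeff p n + (if n = 0 then 0 else c * coeff p (n - 1))"
  by (cases n) (simp_all add: mult.commute)

lemma prod_lin_coeffs:
  fixes b :: "nat \<Rightarrow> 'a :: comm_ring_1"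
  shows "coeff (\<Prod>i<n. [:1, b i:]) 0 = 1"
    "coeff (\<Prod>i<n. [:1, b i:]) 1 = (\<Sum>i<n. b i)"
    "coeff (\<Prod>i<n. [:1, b i:]) 2 = (\<Sum>i<n. b i * (\<Sum>j<i. b j))"
proof (induction n)
  case 0
  show "coeff (\<Prod>i<0. [:1, b i:]) 0 = 1" by simp
  show "coeff (\<Prod>i<0. [:1, b i:]) 1 = (\<Sum>i<0. b i)" by simp
  show "coeff (\<Prod>i<0. [:1, b i:]) 2 = (\<Sum>i<0. b i * (\<Sum>j<i. b j))" by simp
next
  case (Suc n)
  have e: "(\<Prod>i<Suc n. [:1, b i:]) = (\<Prod>i<n. [:1, b i:]) * [:1, b n:]" by simp
  show "coeff (\<Prod>i<Suc n. [:1, b i:]) 0 = 1" unfolding e coeff_mult_lin using Suc by simp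
  show "coeff (\<Prod>i<Suc n. [:1, b i:]) 1 = (\<Sum>i<Suc n. b i)" unfolding e coeff_mult_lin using Suc by (simp add: add.commute)
  show "coeff (\<Prod>i<Suc n. [:1, b i:]) 2 = (\<Sum>i<Suc n. b i * (\<Sum>j<i. b j))"
    unfolding e coeff_mult_lin using Suc by (simp add: numeral_2_eq_2 add.commute)
qed

definition Ep :: "nat \<Rightarrow> real poly poly" where "Ep m = Rpp m - 1"

definition Tp :: "real \<Rightarrow> nat \<Rightarrow> nat \<Rightarrow> real poly poly" where
  "Tp kap m N = (\<Sum>j<N. smult [:kap gchoose j:] (Ep m ^ j))"

lemma Rpp_coeff0: "coeff (Rpp m) 0 = 1"
proof -
  have "coeff (Rpp m) 0 = poly (Rpp m) 0" by (simp add: poly_0_coeff_0)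
  also have "\<dots> = (\<Sum>k\<le>m. (of_nat (m choose k) * (-1) ^ k * monom 1 k) * 0 ^ k * poly (Bp m k) 0)"
    by (simp add: Rpp_def poly_sum poly_monom)
  also have "\<dots> = (\<Sum>k\<le>m. if k = 0 then poly (Bp m 0) 0 else 0)"
    by (intro sum.cong refl) auto
  also have "\<dots> = poly (Bp m 0) 0" by simp
  also have "\<dots> = 1" by (simp add: Bp_def poly_prod)
  finally show ?thesis .
qed

lemma Ep_coeff0: "coeff (Ep m) 0 = 0"
  by (simp add: Ep_def Rpp_coeff0)

lemma coeff_mult_zero_low:
  assumes "\<And>i. i < j \<Longrightarrow> coeff X i = 0" "n < j"
  shows "coeff (Q * X) n = 0"
  unfolding coeff_mult using assms by (intro sum.neutral) auto

lemma Ep_pow_low: "n < j \<Longrightarrow> coeff (Ep m ^ j) n = 0"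
proof (induction j arbitrary: n)
  case 0 then show ?case by simp
next
  case (Suc j)
  obtain a Q where EQ: "Ep m = pCons a Q" by (cases "Ep m") auto
  then have a: "a = 0" using Ep_coeff0[of m] by simp
  have "Ep m ^ Suc j = pCons 0 (Q * Ep m ^ j)" by (simp add: EQ a)
  then show ?case using Suc
    by (cases n) (auto intro!: coeff_mult_zero_low[of j])
qed

lemma Tp_stable:
  assumes "n < N"
  shows "coeff (Tp kap m N) n = coeff (Tp kap m (Suc n)) n"
proof -
  have "coeff (Tp kap m N) n = (\<Sum>j<N. [:kap gchoose j:] * coeff (Ep m ^ j) n)"
    by (simp add: Tp_def coeff_sum)
  also have "\<dots> = (\<Sum>j<Suc n. [:kap gchoose j:] * coeff (Ep m ^ j) n)"
    using assms by (intro sum.mono_neutral_right) (auto simp: Ep_pow_low)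
  also have "\<dots> = coeff (Tp kap m (Suc n)) n" by (simp add: Tp_def coeff_sum)
  finally show ?thesis .
qed

lemma Tp_eval: "poly (poly (Tp kap m N) [:t:]) x = (\<Sum>j<N. (kap gchoose j) * (poly (poly (Rpp m) [:t:]) x - 1) ^ j)"
  by (simp add: Tp_def Ep_def poly_sum poly_power)

lemma poly_meas [measurable]: "(\<lambda>x. poly (q :: real poly) (f x)) \<in> borel_measurable M"
  if [measurable]: "f \<in> borel_measurable M"
proof -
  have "poly q \<in> borel_measurable borel"
    by (intro borel_measurable_continuous_onI continuous_on_poly continuous_on_id)
  then show ?thesis using that by (rule measurable_compose[rotated])
qed

lemma sum_split_add: fixes N L :: nat shows "(\<Sum>n<N+L. f n) = (\<Sum>n<N. f n) + (\<Sum>n<L. f (n + N))"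
  by (induction L) (simp_all add: add.commute add.left_commute)

lemma wt_nonneg: "x > 0 \<Longrightarrow> wt lam mu x \<ge> 0"
  by (simp add: wt_def)

lemma Mom0: "Mom lam mu 0 = Gamma mu / lam powr mu"
  by (simp add: Mom_def)

lemma pp_int_split:
  assumes lam: "lam > 0" and mu: "mu > 0" and t: "0 \<le> t" "t \<le> 1"
  shows "\<exists>T. (LINT x:{0<..}|lborel. wt lam mu x * poly (poly p [:t:]) x) =
    (\<Sum>n<N. Lam lam mu (coeff p n) * t ^ n) + T \<and>
    \<bar>T\<bar> \<le> (\<Sum>n\<le>degree p. \<bar>Lam lam mu (coeff p n)\<bar>) * t ^ N"
proof -
  define f where "f n = Lam lam mu (coeff p n) * t ^ n" for n
  define L where "L = Suc (degree p)"
  have f0: "f n = 0" if "n > degree p" for n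
    using that by (simp add: f_def coeff_eq_0 Lam_def)
  have "(LINT x:{0<..}|lborel. wt lam mu x * poly (poly p [:t:]) x) = (\<Sum>n\<le>degree p. f n)"
    using pp_int(2)[OF lam mu] by (simp add: f_def)
  also have "\<dots> = (\<Sum>n<N+L. f n)"
    by (rule sum.mono_neutral_left) (auto simp: L_def f0)
  also have "\<dots> = (\<Sum>n<N. f n) + (\<Sum>n<L. f (n + N))" by (rule sum_split_add)
  finally have e: "(LINT x:{0<..}|lborel. wt lam mu x * poly (poly p [:t:]) x) = (\<Sum>n<N. f n) + (\<Sum>n<L. f (n + N))" .
  have "\<bar>\<Sum>n<L. f (n + N)\<bar> \<le> (\<Sum>n<L. \<bar>f (n + N)\<bar>)" by (rule sum_abs)
  also have "\<dots> \<le> (\<Sum>n<L. \<bar>Lam lam mu (coeff p (n + N))\<bar> * t ^ N)"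
  proof (rule sum_mono)
    fix n
    have "t ^ n \<le> 1" using t by (rule power_le_one)
    then have "t ^ (n + N) \<le> t ^ N" using t mult_left_le_one_le[of "t ^ N" "t ^ n"] by (simp add: power_add)
    then show "\<bar>f (n + N)\<bar> \<le> \<bar>Lam lam mu (coeff p (n + N))\<bar> * t ^ N"
      using t by (simp add: f_def abs_mult mult_left_mono)
  qed
  also have "\<dots> = (\<Sum>n<L. \<bar>Lam lam mu (coeff p (n + N))\<bar>) * t ^ N" by (simp add: sum_distrib_right)
  also have "(\<Sum>n<L. \<bar>Lam lam mu (coeff p (n + N))\<bar>) \<le> (\<Sum>n\<le>degree p. \<bar>Lam lam mu (coeff p n)\<bar>)"
  proof -
    have "(\<Sum>n<L. \<bar>Lam lam mu (coeff p (n + N))\<bar>) \<le> (\<Sum>n<N+L. \<bar>Lam lam mu (coeff p n)\<bar>)"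
      using sum_split_add[of "\<lambda>n. \<bar>Lam lam mu (coeff p n)\<bar>" N L] by (simp add: sum_nonneg)
    also have "\<dots> = (\<Sum>n\<le>degree p. \<bar>Lam lam mu (coeff p n)\<bar>)"
      by (rule sum.mono_neutral_right) (auto simp: L_def coeff_eq_0 Lam_def)
    finally show ?thesis .
  qed
  then have "(\<Sum>n<L. \<bar>Lam lam mu (coeff p (n + N))\<bar>) * t ^ N \<le> (\<Sum>n\<le>degree p. \<bar>Lam lam mu (coeff p n)\<bar>) * t ^ N"
    using t by (intro mult_right_mono) auto
  finally show ?thesis using e unfolding f_def by blast
qed

lemma F_expansion:
  assumes lam: "lam > 0" and kap: "kap > 0" and mu: "mu > 0"
  shows "\<exists>Cc. \<forall>t. 0 < t \<longrightarrow> t \<le> 1 \<longrightarrow>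
     set_integrable lborel {0<..} (\<lambda>x. wt lam mu x * \<bar>poly (poly (Rpp m) [:t:]) x\<bar> powr kap) \<and>
     \<bar>(LINT x:{0<..}|lborel. wt lam mu x * \<bar>poly (poly (Rpp m) [:t:]) x\<bar> powr kap)
        - (\<Sum>n<N. Lam lam mu (coeff (Tp kap m N) n) * t ^ n)\<bar> \<le> Cc * t ^ N"
proof -
  obtain a0 Q where EQ: "Ep m = pCons a0 Q" by (cases "Ep m") auto
  then have "a0 = 0" using Ep_coeff0[of m] by simp
  with EQ have EQ: "Ep m = pCons 0 Q" by simp
  have Eeval: "poly (poly (Rpp m) [:t:]) x - 1 = t * poly (poly Q [:t:]) x" for t x
  proof -
    have "poly (poly (Ep m) [:t:]) x = poly (poly (Rpp m) [:t:]) x - 1" by (simp add: Ep_def)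
    moreover have "poly (poly (Ep m) [:t:]) x = t * poly (poly Q [:t:]) x" by (simp add: EQ)
    ultimately show ?thesis by simp
  qed
  obtain C Mb where CB: "\<And>x t. x \<ge> 0 \<Longrightarrow> t \<ge> 0 \<Longrightarrow> t \<le> 1 \<Longrightarrow> \<bar>poly (poly Q [:t:]) x\<bar> \<le> C * (1 + x) ^ Mb"
    using pp_bound[of Q] by blast
  have C0: "C \<ge> 0" using CB[of 0 0] by simp
  define Kk where "Kk = nat \<lceil>kap\<rceil>"
  obtain K where KB: "\<And>e::real. \<bar>\<bar>1 + e\<bar> powr kap - (\<Sum>j<N. (kap gchoose j) * e ^ j)\<bar> \<le> K * \<bar>e\<bar> ^ N * (1 + \<bar>e\<bar>) ^ Kk"
    using binom_rem[OF kap, of N] unfolding Kk_def by blast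
  have K0: "K \<ge> 0"
  proof -
    have "0 \<le> K * \<bar>1::real\<bar> ^ N * (1 + \<bar>1::real\<bar>) ^ Kk" using KB[of 1] by (meson abs_ge_zero order.trans)
    moreover have "(0::real) < 2 ^ Kk" by simp
    ultimately show ?thesis by (auto simp: zero_le_mult_iff)
  qed
  define G where "G = Mb * N + Mb * Kk"
  define B where "B = K * C ^ N * (1 + C) ^ Kk"
  have B0: "B \<ge> 0" unfolding B_def using K0 C0 by simp
  define S where "S = (\<Sum>n\<le>degree (Tp kap m N). \<bar>Lam lam mu (coeff (Tp kap m N) n)\<bar>)"
  define U where "U = Lam lam mu ([:1, 1:] ^ G)"
  have polyG: "poly ([:1, 1:] ^ G) x = (1 + x) ^ G" for x :: real by (simp add: poly_power)
  have point: "\<bar>\<bar>poly (poly (Rpp m) [:t:]) x\<bar> powr kap - poly (poly (Tp kap m N) [:t:]) x\<bar> \<le> B * t ^ N * (1 + x) ^ G"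
    if x: "x > 0" and t: "0 < t" "t \<le> 1" for x t
  proof -
    define e where "e = poly (poly (Rpp m) [:t:]) x - 1"
    have R: "poly (poly (Rpp m) [:t:]) x = 1 + e" by (simp add: e_def)
    have P: "poly (poly (Tp kap m N) [:t:]) x = (\<Sum>j<N. (kap gchoose j) * e ^ j)"
      by (simp add: Tp_eval e_def)
    have qb: "\<bar>poly (poly Q [:t:]) x\<bar> \<le> C * (1 + x) ^ Mb" using CB x t by auto
    have eb: "\<bar>e\<bar> \<le> t * (C * (1 + x) ^ Mb)"
      unfolding e_def Eeval using qb t by (simp add: abs_mult mult_left_mono)
    have x1: "1 \<le> (1 + x) ^ Mb" using x by simp
    have eb2: "\<bar>e\<bar> \<le> C * (1 + x) ^ Mb"
      using eb t C0 x by (smt (verit) mult_left_le_one_le zero_le_mult_iff zero_le_power)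
    have A1: "\<bar>e\<bar> ^ N \<le> t ^ N * C ^ N * (1 + x) ^ (Mb * N)"
      using power_mono[OF eb, of N] by (simp add: power_mult_distrib power_mult)
    have A2: "1 + \<bar>e\<bar> \<le> (1 + C) * (1 + x) ^ Mb" using eb2 x1 by (simp add: algebra_simps)
    have A3: "(1 + \<bar>e\<bar>) ^ Kk \<le> (1 + C) ^ Kk * (1 + x) ^ (Mb * Kk)"
      using power_mono[OF A2, of Kk] by (simp add: power_mult_distrib power_mult)
    have "\<bar>\<bar>1 + e\<bar> powr kap - (\<Sum>j<N. (kap gchoose j) * e ^ j)\<bar> \<le> K * \<bar>e\<bar> ^ N * (1 + \<bar>e\<bar>) ^ Kk" by (rule KB)
    also have "\<dots> \<le> K * (t ^ N * C ^ N * (1 + x) ^ (Mb * N)) * ((1 + C) ^ Kk * (1 + x) ^ (Mb * Kk))"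
      using A1 A3 K0 t C0 x by (intro mult_mono mult_left_mono) auto
    also have "\<dots> = B * t ^ N * (1 + x) ^ G" by (simp add: B_def G_def power_add mult_ac)
    finally show ?thesis unfolding R P .
  qed
  have "set_integrable lborel {0<..} (\<lambda>x. wt lam mu x * \<bar>poly (poly (Rpp m) [:t:]) x\<bar> powr kap) \<and>
     \<bar>(LINT x:{0<..}|lborel. wt lam mu x * \<bar>poly (poly (Rpp m) [:t:]) x\<bar> powr kap)
        - (\<Sum>n<N. Lam lam mu (coeff (Tp kap m N) n) * t ^ n)\<bar> \<le> (S + B * U) * t ^ N"
    if t: "0 < t" "t \<le> 1" for t
  proof -
    define g where "g x = wt lam mu x * (\<bar>poly (poly (Rpp m) [:t:]) x\<bar> powr kap - poly (poly (Tp kap m N) [:t:]) x)" for x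
    define bd where "bd x = B * t ^ N * (wt lam mu x * poly ([:1, 1:] ^ G) x)" for x
    have ibd: "set_integrable lborel {0<..} bd"
      unfolding bd_def using poly_int(1)[OF lam mu, of "[:1, 1:] ^ G"] by simp
    have Ibd: "(LINT x:{0<..}|lborel. bd x) = B * t ^ N * U"
      unfolding bd_def U_def using poly_int(2)[OF lam mu, of "[:1, 1:] ^ G"] by simp
    have gb: "\<bar>g x\<bar> \<le> bd x" if "x \<in> {0<..}" for x
    proof -
      have w: "wt lam mu x \<ge> 0" using that by (simp add: wt_nonneg)
      have "\<bar>g x\<bar> = wt lam mu x * \<bar>\<bar>poly (poly (Rpp m) [:t:]) x\<bar> powr kap - poly (poly (Tp kap m N) [:t:]) x\<bar>"
        unfolding g_def using w by (simp add: abs_mult)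
      also have "\<dots> \<le> wt lam mu x * (B * t ^ N * (1 + x) ^ G)"
        using point[of x t] that t w by (intro mult_left_mono) auto
      also have "\<dots> = bd x" by (simp add: bd_def polyG mult_ac)
      finally show ?thesis .
    qed
    have meas: "set_borel_measurable lborel {0<..} g"
      unfolding set_borel_measurable_def g_def wt_def by measurable
    have ig: "set_integrable lborel {0<..} g"
    proof (rule set_integrable_bound[OF ibd meas])
      show "AE x in lborel. x \<in> {0<..} \<longrightarrow> norm (g x) \<le> norm (bd x)"
      proof (intro AE_I2 impI)
        fix x :: real assume x: "x \<in> {0<..}"
        have "norm (g x) \<le> bd x" using gb[OF x] by simp
        also have "\<dots> \<le> norm (bd x)" by simp
        finally show "norm (g x) \<le> norm (bd x)" .
      qed
    qed
    have iP: "set_integrable lborel {0<..} (\<lambda>x. wt lam mu x * poly (poly (Tp kap m N) [:t:]) x)"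
      by (rule pp_int(1)[OF lam mu])
    have eqF: "wt lam mu x * \<bar>poly (poly (Rpp m) [:t:]) x\<bar> powr kap = wt lam mu x * poly (poly (Tp kap m N) [:t:]) x + g x" for x
      by (simp add: g_def algebra_simps)
    have iF: "set_integrable lborel {0<..} (\<lambda>x. wt lam mu x * \<bar>poly (poly (Rpp m) [:t:]) x\<bar> powr kap)"
      unfolding eqF using iP ig by (rule set_integral_add(1))
    have vF: "(LINT x:{0<..}|lborel. wt lam mu x * \<bar>poly (poly (Rpp m) [:t:]) x\<bar> powr kap) =
       (LINT x:{0<..}|lborel. wt lam mu x * poly (poly (Tp kap m N) [:t:]) x) + (LINT x:{0<..}|lborel. g x)"
      unfolding eqF using iP ig by (rule set_integral_add(2))
    obtain T where T: "(LINT x:{0<..}|lborel. wt lam mu x * poly (poly (Tp kap m N) [:t:]) x) =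
      (\<Sum>n<N. Lam lam mu (coeff (Tp kap m N) n) * t ^ n) + T" "\<bar>T\<bar> \<le> S * t ^ N"
      using pp_int_split[OF lam mu, of t "Tp kap m N" N] t unfolding S_def by auto
    have up: "(LINT x:{0<..}|lborel. g x) \<le> B * t ^ N * U"
      unfolding Ibd[symmetric] by (rule set_integral_mono[OF ig ibd]) (use gb in force)
    have ineg: "set_integrable lborel {0<..} (\<lambda>x. (-1) * bd x)" by (rule set_integrable_mult_right) (use ibd in simp)
    have "(LINT x:{0<..}|lborel. (-1) * bd x) \<le> (LINT x:{0<..}|lborel. g x)"
      by (rule set_integral_mono[OF ineg ig]) (use gb in force)
    moreover have "(LINT x:{0<..}|lborel. (-1) * bd x) = - (B * t ^ N * U)"
      using Ibd set_integral_mult_right[where a="-1" and M=lborel and A="{0<..}" and f=bd] by simp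
    ultimately have lo: "- (B * t ^ N * U) \<le> (LINT x:{0<..}|lborel. g x)" by simp
    have "\<bar>(LINT x:{0<..}|lborel. wt lam mu x * \<bar>poly (poly (Rpp m) [:t:]) x\<bar> powr kap)
        - (\<Sum>n<N. Lam lam mu (coeff (Tp kap m N) n) * t ^ n)\<bar> = \<bar>T + (LINT x:{0<..}|lborel. g x)\<bar>"
      unfolding vF T(1) by simp
    also have "\<dots> \<le> S * t ^ N + B * t ^ N * U" using T(2) up lo by linarith
    also have "\<dots> = (S + B * U) * t ^ N" by (simp add: algebra_simps)
    finally show ?thesis using iF by blast
  qed
  then show ?thesis by blast
qed

definition Dc :: "real \<Rightarrow> real \<Rightarrow> real \<Rightarrow> nat \<Rightarrow> nat \<Rightarrow> real" where
  "Dc lam kap mu m n = Lam lam mu (coeff (Tp kap m (Suc n)) n) / Mom lam mu 0"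

lemma I1_eq:
  assumes a: "a > 0"
  shows "I1 lam kap mu m a = (a ^ m / fact m) powr kap *
     (LINT x:{0<..}|lborel. wt lam mu x * \<bar>poly (poly (Rpp m) [:1/a:]) x\<bar> powr kap)"
proof -
  have c: "a ^ m / fact m > 0" using a by simp
  have "I1 lam kap mu m a = (LINT x:{0<..}|lborel. (a ^ m / fact m) powr kap * (wt lam mu x * \<bar>poly (poly (Rpp m) [:1/a:]) x\<bar> powr kap))"
    unfolding I1_def
  proof (rule set_lebesgue_integral_cong)
    show "{0::real<..} \<in> sets lborel" by simp
    show "\<forall>x. x \<in> {0<..} \<longrightarrow> x powr (mu - 1) * exp (- lam * x) * \<bar>laguerre m a x\<bar> powr kap =
      (a ^ m / fact m) powr kap * (wt lam mu x * \<bar>poly (poly (Rpp m) [:1/a:]) x\<bar> powr kap)"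
    proof (intro allI impI)
      fix x :: real
      have "\<bar>laguerre m a x\<bar> = (a ^ m / fact m) * \<bar>poly (poly (Rpp m) [:1/a:]) x\<bar>"
        unfolding laguerre_R[OF a] abs_mult using c a by simp
      then have "\<bar>laguerre m a x\<bar> powr kap = (a ^ m / fact m) powr kap * \<bar>poly (poly (Rpp m) [:1/a:]) x\<bar> powr kap"
        using c powr_mult[of "a ^ m / fact m" "\<bar>poly (poly (Rpp m) [:1/a:]) x\<bar>" kap] by (simp only:)
      then show "x powr (mu - 1) * exp (- lam * x) * \<bar>laguerre m a x\<bar> powr kap =
        (a ^ m / fact m) powr kap * (wt lam mu x * \<bar>poly (poly (Rpp m) [:1/a:]) x\<bar> powr kap)"
        by (simp add: wt_def mult_ac)
    qed
  qed
  also have "\<dots> = (a ^ m / fact m) powr kap * (LINT x:{0<..}|lborel. wt lam mu x * \<bar>poly (poly (Rpp m) [:1/a:]) x\<bar> powr kap)"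
    by (rule set_integral_mult_right)
  finally show ?thesis .
qed

lemma asym_main:
  assumes lam: "lam > 0" and kap: "kap > 0" and mu: "mu > 0"
  shows "\<exists>r :: real \<Rightarrow> real.
       r \<in> O[at_top](\<lambda>a. a powr (- real N)) \<and>
       (\<forall>\<^sub>F a in at_top.
          I1 lam kap mu m a =
            a powr (kap * real m) * Gamma mu / (lam powr mu * fact m powr kap) *
            ((\<Sum>k<N. Dc lam kap mu m k / a ^ k) + r a))"
proof -
  obtain Cc where CC: "\<And>t. 0 < t \<Longrightarrow> t \<le> 1 \<Longrightarrow>
     \<bar>(LINT x:{0<..}|lborel. wt lam mu x * \<bar>poly (poly (Rpp m) [:t:]) x\<bar> powr kap)
        - (\<Sum>n<N. Lam lam mu (coeff (Tp kap m N) n) * t ^ n)\<bar> \<le> Cc * t ^ N"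
    using F_expansion[OF lam kap mu, of m N] by blast
  define M0 where "M0 = Mom lam mu 0"
  have M0: "M0 > 0" using lam mu by (simp add: M0_def Mom0)
  define pref where "pref a = a powr (kap * real m) * Gamma mu / (lam powr mu * fact m powr kap)" for a
  define r where "r a = I1 lam kap mu m a / pref a - (\<Sum>k<N. Dc lam kap mu m k / a ^ k)" for a
  have pref_pos: "pref a > 0" if "a > 0" for a using that lam mu by (simp add: pref_def)
  have ev1: "\<forall>\<^sub>F a in at_top. I1 lam kap mu m a = pref a * ((\<Sum>k<N. Dc lam kap mu m k / a ^ k) + r a)"
    using eventually_gt_at_top[of 0]
  proof eventually_elim
    case (elim a) then show ?case using pref_pos[of a] by (simp add: r_def)
  qed
  have bnd: "norm (r a) \<le> (Cc / M0) * norm (a powr (- real N))" if a: "a \<ge> 1" for a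
  proof -
    define t where "t = 1 / a"
    have a0: "a > 0" using a by simp
    have t: "0 < t" "t \<le> 1" using a by (auto simp: t_def)
    define F where "F = (LINT x:{0<..}|lborel. wt lam mu x * \<bar>poly (poly (Rpp m) [:t:]) x\<bar> powr kap)"
    have pw: "(a ^ m / fact m) powr kap = a powr (kap * real m) / fact m powr kap"
      using a0 by (simp add: powr_divide powr_realpow[symmetric] powr_powr mult.commute)
    have i1: "I1 lam kap mu m a / pref a = F / M0"
      unfolding I1_eq[OF a0] pw pref_def F_def t_def M0_def Mom0 using a0 lam mu
      by (simp add: field_simps)
    have sd: "(\<Sum>k<N. Dc lam kap mu m k / a ^ k) = (\<Sum>n<N. Lam lam mu (coeff (Tp kap m N) n) * t ^ n) / M0"
      unfolding sum_divide_distrib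
    proof (intro sum.cong refl)
      fix k assume "k \<in> {..<N}"
      then have st: "coeff (Tp kap m (Suc k)) k = coeff (Tp kap m N) k" using Tp_stable[of k N kap m] by simp
      show "Dc lam kap mu m k / a ^ k = Lam lam mu (coeff (Tp kap m N) k) * t ^ k / M0"
        unfolding Dc_def st M0_def t_def by (simp add: power_one_over)
    qed
    have "r a = (F - (\<Sum>n<N. Lam lam mu (coeff (Tp kap m N) n) * t ^ n)) / M0"
      unfolding r_def i1 sd by (simp add: diff_divide_distrib)
    then have "\<bar>r a\<bar> = \<bar>F - (\<Sum>n<N. Lam lam mu (coeff (Tp kap m N) n) * t ^ n)\<bar> / M0"
      using M0 by simp
    also have "\<dots> \<le> Cc * t ^ N / M0"
      using CC[OF t] M0 unfolding F_def by (simp add: divide_right_mono)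
    also have "t ^ N = a powr (- real N)" unfolding t_def using a0
      by (simp add: powr_minus powr_realpow power_one_over divide_inverse power_inverse)
    finally show ?thesis using a0 by simp
  qed
  have "r \<in> O[at_top](\<lambda>a. a powr (- real N))"
    by (rule bigoI[where c="Cc / M0"]) (rule eventually_mono[OF eventually_ge_at_top[of "1::real"]], use bnd in auto)
  then show ?thesis using ev1 unfolding pref_def by blast
qed

lemma gch2: "(x::real) gchoose 2 = x * (x - 1) / 2"
  by (simp add: gbinomial_prod_rev numeral_2_eq_2 atLeast0_lessThan_Suc)

lemma sum_const_poly: fixes n :: nat shows "(\<Sum>i<n. [:f i:]) = [:(\<Sum>i<n. f i):]"
  by (induction n) simp_all

lemma sumA: "(\<Sum>i<m. real (m - i)) = real m * (real m + 1) / 2"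
proof -
  have "(\<Sum>i<m. real (m - i)) = (\<Sum>i<m. real (m - Suc i) + 1)"
    by (intro sum.cong refl) (auto simp: of_nat_diff)
  also have "\<dots> = (\<Sum>i<m. real i + 1)"
    using sum.nat_diff_reindex[of "\<lambda>j. real j + 1" m] by simp
  also have "\<dots> = real m * (real m + 1) / 2"
    by (induction m) (simp_all add: field_simps)
  finally show ?thesis .
qed

lemma sumQ: "(\<Sum>i<m. real (m - i) ^ 2) = real m * (real m + 1) * (2 * real m + 1) / 6"
proof -
  have "(\<Sum>i<m. real (m - i) ^ 2) = (\<Sum>i<m. (real (m - Suc i) + 1) ^ 2)"
    by (intro sum.cong refl) (auto simp: of_nat_diff)
  also have "\<dots> = (\<Sum>i<m. (real i + 1) ^ 2)"
    using sum.nat_diff_reindex[of "\<lambda>j. (real j + 1) ^ 2" m] by simp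
  also have "\<dots> = real m * (real m + 1) * (2 * real m + 1) / 6"
    by (induction m) (simp_all add: field_simps power2_eq_square)
  finally show ?thesis .
qed

lemma e2_gen: "2 * (\<Sum>i<n. b i * (\<Sum>j<i. b j)) = (\<Sum>i<n. b i) ^ 2 - (\<Sum>i<n. (b i) ^ 2)"
  for b :: "nat \<Rightarrow> real"
  by (induction n) (simp_all add: algebra_simps power2_eq_square)

lemma sumA': "(\<Sum>i<m - 1. real (m - i)) = real m * (real m + 1) / 2 - 1" if m1: "m \<ge> 1"
proof -
  obtain k where m: "m = Suc k" using m1 by (cases m) auto
  have "(\<Sum>i<k. real (Suc k - i)) = (\<Sum>i<k. real (k - i) + 1)"
    by (intro sum.cong refl) (auto simp: of_nat_diff Suc_diff_le)
  also have "\<dots> = (\<Sum>i<k. real (k - i)) + real k" unfolding sum.distrib by simp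
  also have "\<dots> = real k * (real k + 1) / 2 + real k" unfolding sumA ..
  finally show ?thesis unfolding m by (simp add: field_simps)
qed

lemma LS1: fixes n :: nat shows "(\<Sum>i<n. (of_nat (g i) :: real poly)) = [:\<Sum>i<n. real (g i):]"
  by (induction n) (simp_all add: of_nat_poly)

lemma LS2: fixes n :: nat shows "(\<Sum>i<n. (of_nat (g i) :: real poly) * (\<Sum>j<i. of_nat (g j))) = [:\<Sum>i<n. real (g i) * (\<Sum>j<i. real (g j)):]"
  by (induction n) (simp_all add: of_nat_poly sum_const_poly)

definition cA :: "nat \<Rightarrow> real" where "cA m = (\<Sum>i<m. real (m - i))"
definition cA' :: "nat \<Rightarrow> real" where "cA' m = (\<Sum>i<m - 1. real (m - i))"
definition cE :: "nat \<Rightarrow> real" where "cE m = (\<Sum>i<m. real (m - i) * (\<Sum>j<i. real (m - j)))"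

lemma Bp_c0: "coeff (Bp m k) 0 = 1"
  unfolding Bp_def by (rule prod_lin_coeffs(1))

lemma Bp_c1: "coeff (Bp m k) 1 = [:\<Sum>i<m-k. real (m - i):]"
  unfolding Bp_def prod_lin_coeffs(2) LS1[of "\<lambda>i. m - i"] ..

lemma Bp_c2: "coeff (Bp m 0) 2 = [:cE m:]"
  unfolding Bp_def prod_lin_coeffs(3) cE_def using LS2[of "\<lambda>i. m - i" m] by simp

lemma Rpp_split: "Rpp m = (\<Sum>k<3 + m. monom (of_nat (m choose k) * (-1) ^ k * monom 1 k) k * Bp m k)"
  unfolding Rpp_def by (rule sum.mono_neutral_left) auto

lemma Rpp_coeff_low:
  assumes "n \<le> 2"
  shows "coeff (Rpp m) n = (\<Sum>k<3. coeff (monom (of_nat (m choose k) * (-1) ^ k * monom 1 k) k * Bp m k) n)"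
proof -
  have "coeff (Rpp m) n = (\<Sum>k<3. coeff (monom (of_nat (m choose k) * (-1) ^ k * monom 1 k) k * Bp m k) n)
     + (\<Sum>k<m. coeff (monom (of_nat (m choose (k+3)) * (-1) ^ (k+3) * monom 1 (k+3)) (k+3) * Bp m (k+3)) n)"
    unfolding Rpp_split sum_split_add coeff_add coeff_sum ..
  also have "(\<Sum>k<m. coeff (monom (of_nat (m choose (k+3)) * (-1) ^ (k+3) * monom 1 (k+3)) (k+3) * Bp m (k+3)) n) = 0"
    using assms by (intro sum.neutral) (auto simp: coeff_monom_mult)
  finally show ?thesis by simp
qed


lemma real_choose2: "real (m choose 2) = real m * (real m - 1) / 2"
  by (simp add: binomial_gbinomial gch2)

lemma Rpp_c12:
  "coeff (Rpp m) 1 = coeff (Bp m 0) 1 - of_nat m * monom 1 1 * coeff (Bp m 1) 0"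
  "coeff (Rpp m) 2 = coeff (Bp m 0) 2 - of_nat m * monom 1 1 * coeff (Bp m 1) 1 + of_nat (m choose 2) * monom 1 2 * coeff (Bp m 2) 0"
  by (simp_all add: Rpp_coeff_low numeral_3_eq_3 numeral_2_eq_2 coeff_monom_mult)

lemma Ep_c1: "coeff (Ep m) 1 = [:cA m, - real m:]"
proof -
  have "coeff (Ep m) 1 = coeff (Rpp m) 1" by (simp add: Ep_def)
  also have "\<dots> = [:cA m:] - of_nat m * monom 1 1"
    unfolding Rpp_c12 Bp_c1 Bp_c0 cA_def by simp
  also have "\<dots> = [:cA m, - real m:]"
    by (simp add: of_nat_poly monom_Suc monom_0)
  finally show ?thesis .
qed

lemma Ep_c2: "coeff (Ep m) 2 = [:cE m, - real m * cA' m, real m * (real m - 1) / 2:]"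
proof -
  have "coeff (Ep m) 2 = coeff (Rpp m) 2" by (simp add: Ep_def)
  also have "\<dots> = [:cE m:] - of_nat m * monom 1 1 * [:cA' m:] + of_nat (m choose 2) * monom 1 2"
    unfolding Rpp_c12 Bp_c1 Bp_c0 Bp_c2 cA'_def by simp
  also have "\<dots> = [:cE m, - real m * cA' m, real m * (real m - 1) / 2:]"
    by (simp add: of_nat_poly monom_Suc monom_0 numeral_2_eq_2 real_choose2[unfolded numeral_2_eq_2])
  finally show ?thesis .
qed

lemma Lam3:
  assumes "lam > 0" "mu > 0"
  shows "Lam lam mu [:a, b, c:] = a * Mom lam mu 0 + b * Mom lam mu 1 + c * Mom lam mu 2"
proof -
  have "[:a, b, c:] = monom a 0 + monom b 1 + monom c 2"
    by (simp add: monom_Suc monom_0 numeral_2_eq_2)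
  then show ?thesis using assms by (simp add: Lam_add Lam_monom)
qed

lemma Lam2:
  assumes "lam > 0" "mu > 0"
  shows "Lam lam mu [:a, b:] = a * Mom lam mu 0 + b * Mom lam mu 1"
  using Lam3[OF assms, of a b 0] by simp

lemma Mom12:
  assumes lam: "lam > 0" and mu: "mu > 0"
  shows "Mom lam mu 1 = mu / lam * Mom lam mu 0"
    "Mom lam mu 2 = mu * (mu + 1) / lam ^ 2 * Mom lam mu 0"
proof -
  have nz: "mu \<notin> \<int>\<^sub>\<le>\<^sub>0" "mu + 1 \<notin> \<int>\<^sub>\<le>\<^sub>0" using mu nonpos_Ints_nonpos by force+
  have g1: "Gamma (mu + 1) = mu * Gamma mu" by (rule Gamma_plus1[OF nz(1)])
  have g2: "Gamma (mu + 2) = (mu + 1) * (mu * Gamma mu)"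
    using Gamma_plus1[OF nz(2)] g1 by (simp add: add.assoc)
  have p1: "lam powr (mu + 1) = lam powr mu * lam" using lam by (simp add: powr_add)
  have p2: "lam powr (mu + 2) = lam powr mu * lam ^ 2" using lam by (simp add: powr_add)
  show "Mom lam mu 1 = mu / lam * Mom lam mu 0"
    unfolding Mom_def using g1 p1 lam by simp
  show "Mom lam mu 2 = mu * (mu + 1) / lam ^ 2 * Mom lam mu 0"
    unfolding Mom_def using g2 p2 lam by (simp add: mult_ac)
qed

lemma D0: assumes "lam > 0" "mu > 0" shows "Dc lam kap mu m 0 = 1"
  unfolding Dc_def Tp_def using Gamma_real_pos[OF assms(2)] assms(1) by (simp add: Lam_def Mom0)

lemma Tp_c1: "coeff (Tp kap m 2) 1 = [:kap * cA m, - kap * real m:]"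
  unfolding Tp_def by (simp add: numeral_2_eq_2 Ep_c1[unfolded One_nat_def])

lemma sq2: "[:a, b:] * [:a, b:] = [:a * a, 2 * a * b, b * b::real:]"
  by (simp add: algebra_simps)

lemma Tp_c2: "coeff (Tp kap m 3) 2 = smult kap [:cE m, - real m * cA' m, real m * (real m - 1) / 2:]
     + smult (kap * (kap - 1) / 2) [:cA m * cA m, 2 * cA m * (- real m), real m * real m:]"
proof -
  have e2: "coeff (Ep m ^ 2) 2 = [:cA m, - real m:] * [:cA m, - real m:]"
    by (simp add: power2_eq_square coeff_mult numeral_2_eq_2 atMost_Suc Ep_coeff0 Ep_c1[unfolded One_nat_def])
  have "coeff (Tp kap m 3) 2 = smult kap (coeff (Ep m) 2) + smult (kap gchoose 2) (coeff (Ep m ^ 2) 2)"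
    unfolding Tp_def by (simp add: numeral_3_eq_3 numeral_2_eq_2)
  then show ?thesis unfolding e2 sq2 Ep_c2 gch2 by simp
qed

lemma cA_closed: "cA m = real m * (real m + 1) / 2"
  unfolding cA_def by (rule sumA)

lemma cA'_closed: "m \<ge> 1 \<Longrightarrow> cA' m = real m * (real m + 1) / 2 - 1"
  unfolding cA'_def by (rule sumA')

lemma cE_closed: "cE m = ((real m * (real m + 1) / 2) ^ 2 - real m * (real m + 1) * (2 * real m + 1) / 6) / 2"
proof -
  have "2 * cE m = (\<Sum>i<m. real (m - i)) ^ 2 - (\<Sum>i<m. real (m - i) ^ 2)"
    unfolding cE_def by (rule e2_gen)
  then show ?thesis unfolding sumA sumQ by simp
qed

lemma D1:
  assumes lam: "lam > 0" and mu: "mu > 0"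
  shows "Dc lam kap mu m 1 = kap * real m * (- 2 * mu + real m * lam + lam) / (2 * lam)"
proof -
  have M0: "Mom lam mu 0 > 0" using lam mu by (simp add: Mom0)
  have "Dc lam kap mu m 1 = (kap * cA m * Mom lam mu 0 + (- kap * real m) * (mu / lam * Mom lam mu 0)) / Mom lam mu 0"
    unfolding Dc_def using Tp_c1[of kap m] Lam2[OF lam mu] Mom12[OF lam mu] by (simp add: numeral_2_eq_2)
  also have "\<dots> = kap * cA m - kap * real m * mu / lam" using M0 by (simp add: field_simps)
  also have "\<dots> = kap * real m * (- 2 * mu + real m * lam + lam) / (2 * lam)"
    unfolding cA_closed using lam by (simp add: field_simps)
  finally show ?thesis .
qed

lemma D2:
  assumes lam: "lam > 0" and mu: "mu > 0" and m1: "m \<ge> 1"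
  shows "Dc lam kap mu m 2 = kap * real m / (24 * lam ^ 2) *
      (- 12 * mu * lam * kap * real m ^ 2 + 24 * mu * lam - 12 * mu * lam * kap * real m
       - 4 * real m ^ 2 * lam ^ 2 - 6 * real m * lam ^ 2 + 3 * real m ^ 3 * lam ^ 2 * kap
       - 12 * mu ^ 2 + 12 * mu ^ 2 * kap * real m - 12 * mu + 12 * mu * kap * real m
       + 6 * lam ^ 2 * kap * real m ^ 2 - 2 * lam ^ 2 + 3 * lam ^ 2 * kap * real m)"
proof -
  define M0 where "M0 = Mom lam mu 0"
  have M0: "M0 > 0" using lam mu by (simp add: Mom0 M0_def)
  define c where "c = kap * (kap - 1) / 2"
  have "Lam lam mu (coeff (Tp kap m 3) 2) =
      kap * (cE m * M0 + (- real m * cA' m) * (mu / lam * M0) + (real m * (real m - 1) / 2) * (mu * (mu + 1) / lam ^ 2 * M0))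
    + c * (cA m * cA m * M0 + (2 * cA m * (- real m)) * (mu / lam * M0) + (real m * real m) * (mu * (mu + 1) / lam ^ 2 * M0))"
    unfolding Tp_c2 c_def M0_def using lam mu by (simp add: Lam_add Lam_smult Lam3 Mom12 Mom12(1)[unfolded One_nat_def]) (use lam in \<open>simp add: field_simps; algebra\<close>)
  then have "Dc lam kap mu m 2 =
      kap * (cE m + (- real m * cA' m) * (mu / lam) + (real m * (real m - 1) / 2) * (mu * (mu + 1) / lam ^ 2))
    + c * (cA m * cA m + (2 * cA m * (- real m)) * (mu / lam) + (real m * real m) * (mu * (mu + 1) / lam ^ 2))"
    unfolding Dc_def M0_def[symmetric] using M0 by (simp add: numeral_3_eq_3 numeral_2_eq_2 field_simps)
  also have "\<dots> = kap * real m / (24 * lam ^ 2) *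
      (- 12 * mu * lam * kap * real m ^ 2 + 24 * mu * lam - 12 * mu * lam * kap * real m
       - 4 * real m ^ 2 * lam ^ 2 - 6 * real m * lam ^ 2 + 3 * real m ^ 3 * lam ^ 2 * kap
       - 12 * mu ^ 2 + 12 * mu ^ 2 * kap * real m - 12 * mu + 12 * mu * kap * real m
       + 6 * lam ^ 2 * kap * real m ^ 2 - 2 * lam ^ 2 + 3 * lam ^ 2 * kap * real m)"
    unfolding cE_closed cA_closed cA'_closed[OF m1] c_def using lam
    by (simp add: field_simps power2_eq_square power3_eq_cube)
  finally show ?thesis .
qed

theorem proposition1:
  fixes lam kap mu :: real and m :: nat
  assumes "lam > 0" and "kap > 0" and "mu > 0" and "m \<ge> 1"
  shows "\<exists>D :: nat \<Rightarrow> real.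
    D 0 = 1 \<and>
    D 1 = kap * real m * (- 2 * mu + real m * lam + lam) / (2 * lam) \<and>
    D 2 = kap * real m / (24 * lam ^ 2) *
      (- 12 * mu * lam * kap * real m ^ 2 + 24 * mu * lam - 12 * mu * lam * kap * real m
       - 4 * real m ^ 2 * lam ^ 2 - 6 * real m * lam ^ 2 + 3 * real m ^ 3 * lam ^ 2 * kap
       - 12 * mu ^ 2 + 12 * mu ^ 2 * kap * real m - 12 * mu + 12 * mu * kap * real m
       + 6 * lam ^ 2 * kap * real m ^ 2 - 2 * lam ^ 2 + 3 * lam ^ 2 * kap * real m) \<and>
    (\<forall>N :: nat. \<exists>r :: real \<Rightarrow> real.
       r \<in> O[at_top](\<lambda>a. a powr (- real N)) \<and>
       (\<forall>\<^sub>F a in at_top.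
          I1 lam kap mu m a =
            a powr (kap * real m) * Gamma mu / (lam powr mu * fact m powr kap) *
            ((\<Sum>k<N. D k / a ^ k) + r a)))"
proof -
  have "\<forall>N :: nat. \<exists>r :: real \<Rightarrow> real.
       r \<in> O[at_top](\<lambda>a. a powr (- real N)) \<and>
       (\<forall>\<^sub>F a in at_top.
          I1 lam kap mu m a =
            a powr (kap * real m) * Gamma mu / (lam powr mu * fact m powr kap) *
            ((\<Sum>k<N. Dc lam kap mu m k / a ^ k) + r a))"
    using asym_main[OF assms(1,2,3)] by blast
  then show ?thesis
    using D0[OF assms(1,3)] D1[OF assms(1,3)] D2[OF assms(1,3,4)]
    by (intro exI[of _ "Dc lam kap mu m"]) auto
qed

end
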